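(* Let $X$ be a transitive BE-algebra, $k\in(-1,0]$, and $(X,f)$ an $N$-structure on $X$. For $t\in[-1,0)$ let $[f]_t=\{x\in X: f(x)\le t\}\cup\{x\in X: f(x)+t+k+1\le 0\}$. Then $(X,f)$ is an $([e],[e]\vee[c_k])$-ideal of $X$ if and only if for every $t\in[-1,0)$ the set $[f]_t$ is either empty or an ideal of $X$.
   Context: A BE-algebra is a set $X$ with a binary operation $*$ and a distinguished element $1$ such that for all $x,y,z\in X$: $x*x=1$, $x*1=1$, $1*x=x$, and $x*(y*z)=y*(x*z)$. Write $x\le y$ iff $x*y=1$. A BE-algebra is transitive if $y*z\le(x*y)*(x*z)$ for all $x,y,z\in X$. An ideal of $X$ is a nonempty subset $I\subseteq X$ such that $x*s\in I$ for all $x\in X$, $s\in I$, and $(s*(q*x))*x\in I$ for all $x\in X$ and $s,q\in I$. An $N$-structure on $X$ is a pair $(X,f)$ where $f:X\to[-1,0]$ is any function. Fix $k\in(-1,0]$. For $x\in X$ and $t\in[-1,0)$, write $\frac{x}{t}[e]f$ if $f(x)\le t$, and $\frac{x}{t}[c_k]f$ if $f(x)+t+k+1<0$; write $\frac{x}{t}([e]\vee[c_k])f$ if at least one of these holds. The $N$-structure $(X,f)$ is an $([e],[e]\vee[c_k])$-ideal of $X$ if for all $x,y,z\in X$ and all $t,r\in[-1,0)$: (i) $f(y)\le t$ implies $\frac{x*y}{t}([e]\vee[c_k])f$; (ii) $f(x)\le t$ and $f(y)\le r$ together imply $\frac{(x*(y*z))*z}{\max\{t,r\}}([e]\vee[c_k])f$.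 *)

theory Defs
  imports Complex_Main
begin

definition BE_algebra :: "('a \<Rightarrow> 'a \<Rightarrow> 'a) \<Rightarrow> 'a \<Rightarrow> bool" where
  "BE_algebra m one \<longleftrightarrow>
     (\<forall>x. m x x = one) \<and> (\<forall>x. m x one = one) \<and> (\<forall>x. m one x = x) \<and>
     (\<forall>x y z. m x (m y z) = m y (m x z))"

definition BE_le :: "('a \<Rightarrow> 'a \<Rightarrow> 'a) \<Rightarrow> 'a \<Rightarrow> 'a \<Rightarrow> 'a \<Rightarrow> bool" where
  "BE_le m one x y \<longleftrightarrow> m x y = one"

definition transitive_BE :: "('a \<Rightarrow> 'a \<Rightarrow> 'a) \<Rightarrow> 'a \<Rightarrow> bool" where
  "transitive_BE m one \<longleftrightarrow> BE_algebra m one \<and>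
     (\<forall>x y z. BE_le m one (m y z) (m (m x y) (m x z)))"

definition BE_ideal :: "('a \<Rightarrow> 'a \<Rightarrow> 'a) \<Rightarrow> 'a set \<Rightarrow> bool" where
  "BE_ideal m I \<longleftrightarrow> I \<noteq> {} \<and>
     (\<forall>x s. s \<in> I \<longrightarrow> m x s \<in> I) \<and>
     (\<forall>x s q. s \<in> I \<longrightarrow> q \<in> I \<longrightarrow> m (m s (m q x)) x \<in> I)"

definition N_structure :: "('a \<Rightarrow> real) \<Rightarrow> bool" where
  "N_structure f \<longleftrightarrow> (\<forall>x. f x \<in> {-1..0})"

definition in_e :: "('a \<Rightarrow> real) \<Rightarrow> 'a \<Rightarrow> real \<Rightarrow> bool" where
  "in_e f x t \<longleftrightarrow> f x \<le> t"

definition in_ck :: "real \<Rightarrow> ('a \<Rightarrow> real) \<Rightarrow> 'a \<Rightarrow> real \<Rightarrow> bool" where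
  "in_ck k f x t \<longleftrightarrow> f x + t + k + 1 < 0"

definition in_e_or_ck :: "real \<Rightarrow> ('a \<Rightarrow> real) \<Rightarrow> 'a \<Rightarrow> real \<Rightarrow> bool" where
  "in_e_or_ck k f x t \<longleftrightarrow> in_e f x t \<or> in_ck k f x t"

definition e_eck_ideal :: "('a \<Rightarrow> 'a \<Rightarrow> 'a) \<Rightarrow> real \<Rightarrow> ('a \<Rightarrow> real) \<Rightarrow> bool" where
  "e_eck_ideal m k f \<longleftrightarrow>
     (\<forall>x y t. t \<in> {-1..<0} \<longrightarrow> f y \<le> t \<longrightarrow> in_e_or_ck k f (m x y) t) \<and>
     (\<forall>x y z t r. t \<in> {-1..<0} \<longrightarrow> r \<in> {-1..<0} \<longrightarrow> f x \<le> t \<longrightarrow> f y \<le> r \<longrightarrow>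
        in_e_or_ck k f (m (m x (m y z)) z) (max t r))"

text \<open>[f]_t as in the statement (note: non-strict inequality in the second part).\<close>
definition level_set :: "real \<Rightarrow> ('a \<Rightarrow> real) \<Rightarrow> real \<Rightarrow> 'a set" where
  "level_set k f t = {x. f x \<le> t} \<union> {x. f x + t + k + 1 \<le> 0}"

end

theory Submission
  imports Defs
begin

lemma lev:
  assumes t: "t \<in> {-1..<0}" and k: "k \<in> {-1<..0}" and N: "N_structure f"
    and w: "w \<in> level_set k f t"
  shows "(\<exists>a\<in>{-1..<0}. f w \<le> a \<and> (\<forall>v. in_e_or_ck k f v a \<longrightarrow> v \<in> level_set k f t))
         \<or> level_set k f t = UNIV"
proof (cases "f w \<le> t")
  case True
  then show ?thesis using t
    by (auto simp: in_e_or_ck_def in_e_def in_ck_def level_set_def)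
next
  case False
  hence w2: "f w + t + k + 1 \<le> 0" using w by (auto simp: level_set_def)
  show ?thesis
  proof (cases "-(t+k+1) < 0")
    case True
    have "-(t+k+1) \<in> {-1..<0}" using True t k by auto
    moreover have "\<forall>v. in_e_or_ck k f v (-(t+k+1)) \<longrightarrow> v \<in> level_set k f t"
      by (auto simp: in_e_or_ck_def in_e_def in_ck_def level_set_def)
    moreover have "f w \<le> -(t+k+1)" using w2 by linarith
    ultimately show ?thesis by blast
  next
    case False
    have "\<forall>v. f v \<le> 0" using N by (auto simp: N_structure_def)
    hence "level_set k f t = UNIV" using False
      unfolding level_set_def by (smt (verit) UNIV_eq_I UnI2 mem_Collect_eq)
    then show ?thesis by blast
  qed
qed

theorem mainTheorem12:
  fixes m :: "'a \<Rightarrow> 'a \<Rightarrow> 'a" and one :: 'a and k :: real and f :: "'a \<Rightarrow> real"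
  assumes "transitive_BE m one"
    and "k \<in> {-1<..0}"
    and "N_structure f"
  shows "e_eck_ideal m k f \<longleftrightarrow>
           (\<forall>t \<in> {-1..<0}. level_set k f t = {} \<or> BE_ideal m (level_set k f t))"
proof
  have fle: "\<And>v. f v \<le> 0" "\<And>v. f v \<ge> -1" using assms(3) by (auto simp: N_structure_def)
  assume E: "e_eck_ideal m k f"
  have E1: "\<And>x y t. t \<in> {-1..<0} \<Longrightarrow> f y \<le> t \<Longrightarrow> in_e_or_ck k f (m x y) t"
    and E2: "\<And>x y z t r. t \<in> {-1..<0} \<Longrightarrow> r \<in> {-1..<0} \<Longrightarrow> f x \<le> t \<Longrightarrow> f y \<le> r \<Longrightarrow>
        in_e_or_ck k f (m (m x (m y z)) z) (max t r)"
    using E unfolding e_eck_ideal_def by blast+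
  show "\<forall>t \<in> {-1..<0}. level_set k f t = {} \<or> BE_ideal m (level_set k f t)"
  proof (intro ballI)
    fix t :: real assume t: "t \<in> {-1..<0}"
    let ?L = "level_set k f t"
    have c1: "\<forall>x s. s \<in> ?L \<longrightarrow> m x s \<in> ?L"
    proof (intro allI impI)
      fix x s assume s: "s \<in> ?L"
      from lev[OF t assms(2,3) s] show "m x s \<in> ?L"
      proof
        assume "\<exists>a\<in>{-1..<0}. f s \<le> a \<and> (\<forall>v. in_e_or_ck k f v a \<longrightarrow> v \<in> ?L)"
        then obtain a where a: "a \<in> {-1..<0}" "f s \<le> a" "\<forall>v. in_e_or_ck k f v a \<longrightarrow> v \<in> ?L"
          by blast
        show ?thesis using E1[OF a(1,2)] a(3) by blast
      qed auto
    qed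
    have c2: "\<forall>x s q. s \<in> ?L \<longrightarrow> q \<in> ?L \<longrightarrow> m (m s (m q x)) x \<in> ?L"
    proof (intro allI impI)
      fix x s q assume s: "s \<in> ?L" and q: "q \<in> ?L"
      show "m (m s (m q x)) x \<in> ?L"
      proof (cases "?L = UNIV")
        case True then show ?thesis by blast
      next
        case False
        obtain a where a: "a \<in> {-1..<0}" "f s \<le> a" "\<forall>v. in_e_or_ck k f v a \<longrightarrow> v \<in> ?L"
          using lev[OF t assms(2,3) s] False by blast
        obtain b where b: "b \<in> {-1..<0}" "f q \<le> b" "\<forall>v. in_e_or_ck k f v b \<longrightarrow> v \<in> ?L"
          using lev[OF t assms(2,3) q] False by blast
        have "in_e_or_ck k f (m (m s (m q x)) x) (max a b)" using E2[OF a(1) b(1) a(2) b(2)] .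
        then show ?thesis using a(3) b(3) by (cases "a \<le> b") (auto simp: max_def)
      qed
    qed
    show "?L = {} \<or> BE_ideal m ?L" using c1 c2 by (auto simp: BE_ideal_def)
  qed
next
  have fle: "\<And>v. f v \<le> 0" "\<And>v. f v \<ge> -1" using assms(3) by (auto simp: N_structure_def)
  assume H: "\<forall>t \<in> {-1..<0}. level_set k f t = {} \<or> BE_ideal m (level_set k f t)"
  have key: "in_e_or_ck k f w M"
    if M: "M \<in> {-1..<0}" and cl: "\<And>s. s \<in> {-1..<0} \<Longrightarrow> M \<le> s \<Longrightarrow> BE_ideal m (level_set k f s) \<Longrightarrow> w \<in> level_set k f s"
      and ne: "\<And>s. M \<le> s \<Longrightarrow> level_set k f s \<noteq> {}"
    for w M
  proof (rule ccontr)
    assume nw: "\<not> in_e_or_ck k f w M"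
    hence A: "f w > M" "f w + M + k + 1 \<ge> 0" by (auto simp: in_e_or_ck_def in_e_def in_ck_def)
    define s where "s = (M + f w) / 2"
    have s: "s \<in> {-1..<0}" "M \<le> s" using A M fle[of w] by (auto simp: s_def)
    have "BE_ideal m (level_set k f s)" using H s ne[OF s(2)] by blast
    hence "w \<in> level_set k f s" using cl s by blast
    thus False using A by (auto simp: level_set_def s_def field_simps)
  qed
  show "e_eck_ideal m k f"
    unfolding e_eck_ideal_def
  proof (intro conjI allI impI)
    fix x y t assume t: "t \<in> {-1..<0}" and y: "f y \<le> t"
    show "in_e_or_ck k f (m x y) t"
    proof (rule key[OF t])
      fix s assume "s \<in> {-1..<0}" "t \<le> s" "BE_ideal m (level_set k f s)"
      moreover have "y \<in> level_set k f s" using y \<open>t \<le> s\<close> by (auto simp: level_set_def)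
      ultimately show "m x y \<in> level_set k f s" by (auto simp: BE_ideal_def)
    next
      fix s assume "t \<le> s"
      thus "level_set k f s \<noteq> {}" using y unfolding level_set_def by (smt (verit) UnI1 empty_iff mem_Collect_eq)
    qed
  next
    fix x y z t r assume t: "t \<in> {-1..<0}" and r: "r \<in> {-1..<0}" and x: "f x \<le> t" and y: "f y \<le> r"
    have M: "max t r \<in> {-1..<0}" using t r by (auto simp: max_def)
    show "in_e_or_ck k f (m (m x (m y z)) z) (max t r)"
    proof (rule key[OF M])
      fix s assume "s \<in> {-1..<0}" "max t r \<le> s" "BE_ideal m (level_set k f s)"
      moreover have "x \<in> level_set k f s" "y \<in> level_set k f s"
        using x y \<open>max t r \<le> s\<close> by (auto simp: level_set_def)
      ultimately show "m (m x (m y z)) z \<in> level_set k f s" by (auto simp: BE_ideal_def)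
    next
      fix s assume "max t r \<le> s"
      thus "level_set k f s \<noteq> {}" using x unfolding level_set_def by (smt (verit) UnI1 empty_iff mem_Collect_eq max.cobounded1)
    qed
  qed
qed

end
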